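(* Let $\mathbb{F}$ be a field, $X$ a finite set, $I$ an ideal of the free associative algebra $\mathbb{F}\langle X\rangle$, and $A=\mathbb{F}\langle X\rangle/I$. Let $<$ be a monomial order on $X^*$ and let $\widetilde{A_<}$ be the associated monomial algebra of $A$ with respect to $<$. Suppose there exist a real polynomial $f(x)$ of degree $d\ge 1$ and an integer $N$ such that for all $u,v\in X^*$ with $|u|\ge N$, $$u<v \implies |u|\le f(|v|).$$ Then $$\operatorname{GKdim}(\widetilde{A_<})\le \operatorname{GKdim}(A)\le d\cdot \operatorname{GKdim}(\widetilde{A_<}).$$
   Context: All algebras are associative and unital over a field $\mathbb{F}$. $X^*$ is the free monoid on $X$ (words, with empty word $1$), and $|u|$ denotes the length of a word $u$. A monomial order on $X^*$ is a well order $<$ on $X^*$ such that $u<v$ implies $w_1uw_2<w_1vw_2$ for all $w_1,w_2\in X^*$. For $0\ne g\in\mathbb{F}\langle X\rangle$, $\overline{g}$ denotes its leading monomial, i.e. the $<$-largest word appearing in $g$ with nonzero coefficient. For an ideal $I$, $\overline{I}=\{\overline{g}\mid 0\neq g\in I\}$, and the associated monomial algebra of $A=\mathbb{F}\langle X\rangle/I$ with respect to $<$ is $\widetilde{A_<}=\mathbb{F}\langle X\rangle/J$, where $J$ is the ideal generated by $\overline{I}$. $\operatorname{GKdim}$ denotes Gelfand–Kirillov dimension. *)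

theory Defs
  imports Complex_Main "HOL-Computational_Algebra.Polynomial"
    "HOL-Library.Extended_Real" "HOL-Library.Liminf_Limsup"
begin

text \<open>Elements of the free algebra F<X>: finitely supported functions from words
  (lists over X) to the field 'k.  Words are lists; the empty list is the empty word.\<close>

definition fa_elem :: "'x set \<Rightarrow> ('x list \<Rightarrow> 'k::field) \<Rightarrow> bool" where
  "fa_elem X p \<longleftrightarrow> finite {w. p w \<noteq> 0} \<and> (\<forall>w. p w \<noteq> 0 \<longrightarrow> w \<in> lists X)"

definition fa_zero :: "'x list \<Rightarrow> 'k::field" where
  "fa_zero = (\<lambda>_. 0)"

definition fa_add :: "('x list \<Rightarrow> 'k::field) \<Rightarrow> ('x list \<Rightarrow> 'k) \<Rightarrow> 'x list \<Rightarrow> 'k" where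
  "fa_add p q = (\<lambda>w. p w + q w)"

definition fa_mul :: "('x list \<Rightarrow> 'k::field) \<Rightarrow> ('x list \<Rightarrow> 'k) \<Rightarrow> 'x list \<Rightarrow> 'k" where
  "fa_mul p q = (\<lambda>w. \<Sum>i\<le>length w. p (take i w) * q (drop i w))"

definition fa_mono :: "'x list \<Rightarrow> 'x list \<Rightarrow> 'k::field" where
  "fa_mono u = (\<lambda>v. if v = u then 1 else 0)"

definition fa_ideal :: "'x set \<Rightarrow> ('x list \<Rightarrow> 'k::field) set \<Rightarrow> bool" where
  "fa_ideal X I \<longleftrightarrow> I \<subseteq> {p. fa_elem X p} \<and> fa_zero \<in> I \<and>
     (\<forall>p\<in>I. \<forall>q\<in>I. fa_add p q \<in> I) \<and>
     (\<forall>p\<in>I. \<forall>a b. fa_elem X a \<and> fa_elem X b \<longrightarrow> fa_mul (fa_mul a p) b \<in> I)"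

definition fa_ideal_gen_monos :: "'x set \<Rightarrow> 'x list set \<Rightarrow> ('x list \<Rightarrow> 'k::field) set" where
  "fa_ideal_gen_monos X S = \<Inter>{J. fa_ideal X J \<and> fa_mono ` S \<subseteq> J}"

definition monomial_order :: "'x set \<Rightarrow> ('x list \<Rightarrow> 'x list \<Rightarrow> bool) \<Rightarrow> bool" where
  "monomial_order X lt \<longleftrightarrow>
     (\<forall>u\<in>lists X. \<not> lt u u) \<and>
     (\<forall>u\<in>lists X. \<forall>v\<in>lists X. \<forall>w\<in>lists X. lt u v \<longrightarrow> lt v w \<longrightarrow> lt u w) \<and>
     (\<forall>u\<in>lists X. \<forall>v\<in>lists X. u = v \<or> lt u v \<or> lt v u) \<and>
     wf {(u, v). u \<in> lists X \<and> v \<in> lists X \<and> lt u v} \<and>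
     (\<forall>u\<in>lists X. \<forall>v\<in>lists X. \<forall>w1\<in>lists X. \<forall>w2\<in>lists X.
        lt u v \<longrightarrow> lt (w1 @ u @ w2) (w1 @ v @ w2))"

definition lead_mono :: "('x list \<Rightarrow> 'x list \<Rightarrow> bool) \<Rightarrow> ('x list \<Rightarrow> 'k::field) \<Rightarrow> 'x list" where
  "lead_mono lt g = (THE w. g w \<noteq> 0 \<and> (\<forall>v. g v \<noteq> 0 \<longrightarrow> v = w \<or> lt v w))"

definition lead_monos :: "('x list \<Rightarrow> 'x list \<Rightarrow> bool) \<Rightarrow> ('x list \<Rightarrow> 'k::field) set \<Rightarrow> 'x list set" where
  "lead_monos lt I = {lead_mono lt g | g. g \<in> I \<and> g \<noteq> fa_zero}"

text \<open>The ideal J generated by the leading monomials; the associated monomial algebra is F<X>/J.\<close>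
definition assoc_monomial_ideal :: "'x set \<Rightarrow> ('x list \<Rightarrow> 'x list \<Rightarrow> bool) \<Rightarrow> ('x list \<Rightarrow> 'k::field) set \<Rightarrow> ('x list \<Rightarrow> 'k) set" where
  "assoc_monomial_ideal X lt I = fa_ideal_gen_monos X (lead_monos lt I)"

definition indep_mod :: "('x list \<Rightarrow> 'k::field) set \<Rightarrow> 'x list set \<Rightarrow> bool" where
  "indep_mod I S \<longleftrightarrow> (\<forall>c :: 'x list \<Rightarrow> 'k.
      (\<lambda>v. \<Sum>w\<in>S. c w * fa_mono w v) \<in> I \<longrightarrow> (\<forall>w\<in>S. c w = 0))"

text \<open>Growth function of F<X>/I w.r.t. the generating subspace V = span(1, X):
  dim V^n = dimension of the span of the images of the words of length \<le> n,
  i.e. the maximal size of a set of such words whose images are linearly independent.\<close>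
definition growth :: "'x set \<Rightarrow> ('x list \<Rightarrow> 'k::field) set \<Rightarrow> nat \<Rightarrow> nat" where
  "growth X I n = Max {card S | S. S \<subseteq> {w \<in> lists X. length w \<le> n} \<and> indep_mod I S}"

definition GKdim :: "'x set \<Rightarrow> ('x list \<Rightarrow> 'k::field) set \<Rightarrow> ereal" where
  "GKdim X I = limsup (\<lambda>n. ereal (ln (real (growth X I n)) / ln (real n)))"

end

theory Submission
  imports Defs "HOL-Library.Function_Algebras"
begin
lemma sum_fun_app: "(sum f A) x = sum (\<lambda>a. f a x) A"
  by (induction A rule: infinite_finite_induct) auto

lemma fa_add_eq: "fa_add p q = p + q" by (simp add: fa_add_def fun_eq_iff)
lemma fa_zero_eq: "fa_zero = 0" by (simp add: fa_zero_def fun_eq_iff)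

lemma fa_mul_mono_left:
  "fa_mul (fa_mono a) p = (\<lambda>w. if take (length a) w = a then p (drop (length a) w) else 0)"
proof (rule ext)
  fix w :: "'a list"
  have "(\<Sum>i\<le>length w. fa_mono a (take i w) * p (drop i w)) =
        (\<Sum>i\<in>{..length w}. if i = length a then (if take (length a) w = a then p (drop (length a) w) else 0) else 0)"
    by (rule sum.cong) (auto simp: fa_mono_def)
  also have "\<dots> = (if take (length a) w = a then p (drop (length a) w) else 0)"
    by (auto simp: sum.delta)
  finally show "fa_mul (fa_mono a) p w = (if take (length a) w = a then p (drop (length a) w) else 0)"
    by (simp add: fa_mul_def)
qed

lemma fa_mul_mono_right:
  "fa_mul p (fa_mono b) = (\<lambda>w. if drop (length w - length b) w = b \<and> length b \<le> length w then p (take (length w - length b) w) else 0)"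
proof (rule ext)
  fix w :: "'a list"
  have "(\<Sum>i\<le>length w. p (take i w) * fa_mono b (drop i w)) =
        (\<Sum>i\<in>{..length w}. if i = length w - length b then (if drop (length w - length b) w = b \<and> length b \<le> length w then p (take (length w - length b) w) else 0) else 0)"
    by (rule sum.cong) (auto simp: fa_mono_def)
  also have "\<dots> = (if drop (length w - length b) w = b \<and> length b \<le> length w then p (take (length w - length b) w) else 0)"
    by (auto simp: sum.delta)
  finally show "fa_mul p (fa_mono b) w = (if drop (length w - length b) w = b \<and> length b \<le> length w then p (take (length w - length b) w) else 0)"
    by (simp add: fa_mul_def)
qed

lemma fa_mul_monos: "fa_mul (fa_mul (fa_mono a) p) (fa_mono b) (a @ t @ b) = p t"
  by (simp add: fa_mul_mono_left fa_mul_mono_right)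

lemma fa_mul_monos_zero:
  assumes "\<not> (\<exists>t. v = a @ t @ b)"
  shows "fa_mul (fa_mul (fa_mono a) p) (fa_mono b) v = 0"
proof -
  { assume h1: "drop (length v - length b) v = b" "length b \<le> length v"
      and h2: "take (length a) (take (length v - length b) v) = a"
    have "v = take (length v - length b) v @ drop (length v - length b) v" by simp
    also have "take (length v - length b) v = a @ drop (length a) (take (length v - length b) v)"
      using h2 by (metis append_take_drop_id)
    finally have "v = a @ drop (length a) (take (length v - length b) v) @ b" using h1 by simp
    with assms have False by blast }
  then show ?thesis by (auto simp: fa_mul_mono_left fa_mul_mono_right)
qed


lemma fa_elem_mono: "w \<in> lists X \<Longrightarrow> fa_elem X (fa_mono w)"
  by (auto simp: fa_elem_def fa_mono_def)

lemma fa_mul_const_left: "fa_mul (\<lambda>v. c * fa_mono [] v) p = (\<lambda>w. c * p w)"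
proof (rule ext)
  fix w :: "'a list"
  have "(\<Sum>i\<le>length w. c * fa_mono [] (take i w) * p (drop i w)) =
        (\<Sum>i\<in>{..length w}. if i = 0 then c * p w else 0)"
    by (rule sum.cong) (auto simp: fa_mono_def)
  then show "fa_mul (\<lambda>v. c * fa_mono [] v) p w = c * p w"
    by (simp add: fa_mul_def)
qed

lemma fa_mul_nil_right: "fa_mul p (fa_mono []) = p"
  by (simp add: fa_mul_mono_right)

context
  fixes X :: "'x set" and I :: "('x list \<Rightarrow> 'k::field) set"
  assumes idl: "fa_ideal X I"
begin

lemma ideal_zero: "0 \<in> I"
  using idl by (simp add: fa_ideal_def fa_zero_eq)

lemma ideal_add: "p \<in> I \<Longrightarrow> q \<in> I \<Longrightarrow> p + q \<in> I"
  using idl by (simp add: fa_ideal_def fa_add_eq)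

lemma ideal_elem: "p \<in> I \<Longrightarrow> fa_elem X p"
  using idl by (auto simp: fa_ideal_def)

lemma ideal_mul: "p \<in> I \<Longrightarrow> fa_elem X a \<Longrightarrow> fa_elem X b \<Longrightarrow> fa_mul (fa_mul a p) b \<in> I"
  using idl by (auto simp: fa_ideal_def)

lemma ideal_scale: "p \<in> I \<Longrightarrow> (\<lambda>w. c * p w) \<in> I"
proof -
  assume p: "p \<in> I"
  have "fa_elem X (\<lambda>v. c * fa_mono [] v)"
    unfolding fa_elem_def
    by (rule conjI, rule finite_subset[of _ "{[]}"]) (auto simp: fa_mono_def)
  from ideal_mul[OF p this fa_elem_mono[of "[]" X]] show ?thesis
    by (simp add: fa_mul_const_left fa_mul_nil_right)
qed

lemma ideal_diff: "p \<in> I \<Longrightarrow> q \<in> I \<Longrightarrow> p - q \<in> I"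
proof -
  assume "p \<in> I" "q \<in> I"
  then have "p + (\<lambda>w. (-1) * q w) \<in> I" by (intro ideal_add ideal_scale)
  moreover have "p + (\<lambda>w. (-1) * q w) = p - q" by (simp add: fun_eq_iff)
  ultimately show ?thesis by simp
qed

lemma ideal_sum: "finite E \<Longrightarrow> (\<And>v. v \<in> E \<Longrightarrow> q v \<in> I) \<Longrightarrow> (\<lambda>t. \<Sum>v\<in>E. k v * q v t) \<in> I"
proof (induction E rule: finite_induct)
  case empty
  then show ?case using ideal_zero by (simp add: zero_fun_def)
next
  case (insert x F)
  have "(\<lambda>t. \<Sum>v\<in>insert x F. k v * q v t) = (\<lambda>t. k x * q x t) + (\<lambda>t. \<Sum>v\<in>F. k v * q v t)"
    using insert by (simp add: fun_eq_iff)
  then show ?case using insert by (simp add: ideal_add ideal_scale)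
qed

end

lemma mo_irr: "monomial_order X lt \<Longrightarrow> u \<in> lists X \<Longrightarrow> \<not> lt u u"
  unfolding monomial_order_def by blast
lemma mo_tr: "monomial_order X lt \<Longrightarrow> u \<in> lists X \<Longrightarrow> v \<in> lists X \<Longrightarrow> z \<in> lists X \<Longrightarrow> lt u v \<Longrightarrow> lt v z \<Longrightarrow> lt u z"
  unfolding monomial_order_def by blast
lemma mo_tot: "monomial_order X lt \<Longrightarrow> u \<in> lists X \<Longrightarrow> v \<in> lists X \<Longrightarrow> u = v \<or> lt u v \<or> lt v u"
  unfolding monomial_order_def by blast
lemma mo_wf: "monomial_order X lt \<Longrightarrow> wf {(u, v). u \<in> lists X \<and> v \<in> lists X \<and> lt u v}"
  unfolding monomial_order_def by blast
lemma mo_comp: "monomial_order X lt \<Longrightarrow> u \<in> lists X \<Longrightarrow> v \<in> lists X \<Longrightarrow> w1 \<in> lists X \<Longrightarrow> w2 \<in> lists X \<Longrightarrow>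
        lt u v \<Longrightarrow> lt (w1 @ u @ w2) (w1 @ v @ w2)"
  unfolding monomial_order_def by blast

lemma max_exists:
  assumes mo: "monomial_order X lt" and "finite S" "S \<noteq> {}" "S \<subseteq> lists X"
  shows "\<exists>w\<in>S. \<forall>v\<in>S. v = w \<or> lt v w"
  using assms(2-4)
proof (induction S rule: finite_ne_induct)
  case (singleton x) then show ?case by auto
next
  case (insert x F)
  have FX: "F \<subseteq> lists X" using insert.prems by simp
  obtain w where w: "w \<in> F" "\<forall>v\<in>F. v = w \<or> lt v w" using insert.IH[OF FX] by blast
  have xX: "x \<in> lists X" using insert.prems by simp
  have wX: "w \<in> lists X" using FX w(1) by blast
  have tot: "x = w \<or> lt x w \<or> lt w x" using mo_tot[OF mo xX wX] .
  note tr = mo_tr[OF mo]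
  show ?case
  proof (cases "lt w x")
    case True
    have "\<forall>v\<in>insert x F. v = x \<or> lt v x"
    proof
      fix v assume v: "v \<in> insert x F"
      show "v = x \<or> lt v x"
      proof (cases "v = x")
        case False
        then have "v \<in> F" using v by simp
        then have "v = w \<or> lt v w" using w by simp
        moreover have "v \<in> lists X" "w \<in> lists X" "x \<in> lists X" using insert.prems w \<open>v \<in> F\<close> by auto
        ultimately show ?thesis using True tr by blast
      qed simp
    qed
    then show ?thesis by blast
  next
    case False
    then show ?thesis using w tot by auto
  qed
qed

lemma lead_mono_props:
  assumes mo: "monomial_order X lt" and g: "fa_elem X g" and nz: "g \<noteq> fa_zero"
  shows "g (lead_mono lt g) \<noteq> 0" "\<And>v. g v \<noteq> 0 \<Longrightarrow> v = lead_mono lt g \<or> lt v (lead_mono lt g)"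
    "lead_mono lt g \<in> lists X"
proof -
  let ?S = "{w. g w \<noteq> 0}"
  have fin: "finite ?S" and sub: "?S \<subseteq> lists X" using g by (auto simp: fa_elem_def)
  have ne: "?S \<noteq> {}" using nz by (auto simp: fa_zero_def fun_eq_iff)
  obtain w where w: "w \<in> ?S" "\<forall>v\<in>?S. v = w \<or> lt v w" using max_exists[OF mo fin ne sub] by blast
  note irr = mo_irr[OF mo] and tr = mo_tr[OF mo]
  have uniq: "\<And>w'. g w' \<noteq> 0 \<and> (\<forall>v. g v \<noteq> 0 \<longrightarrow> v = w' \<or> lt v w') \<Longrightarrow> w' = w"
  proof -
    fix w' assume h: "g w' \<noteq> 0 \<and> (\<forall>v. g v \<noteq> 0 \<longrightarrow> v = w' \<or> lt v w')"
    show "w' = w"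
    proof (rule ccontr)
      assume "w' \<noteq> w"
      then have "lt w w'" "lt w' w" using h w by auto
      moreover have "w \<in> lists X" "w' \<in> lists X" using w h sub by auto
      ultimately show False using tr irr by blast
    qed
  qed
  have lm: "lead_mono lt g = w"
    unfolding lead_mono_def
  proof (rule the_equality)
    show "g w \<noteq> 0 \<and> (\<forall>v. g v \<noteq> 0 \<longrightarrow> v = w \<or> lt v w)" using w by simp
  qed (rule uniq)
  show "g (lead_mono lt g) \<noteq> 0" unfolding lm using w(1) by simp
  show "\<And>v. g v \<noteq> 0 \<Longrightarrow> v = lead_mono lt g \<or> lt v (lead_mono lt g)" unfolding lm using w(2) by simp
  show "lead_mono lt g \<in> lists X" unfolding lm using w(1) sub by blast
qed


lemma combo_eval: "finite S \<Longrightarrow> (\<Sum>w\<in>S. c w * fa_mono w v) = (if v \<in> S then c v else 0)"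
proof -
  assume "finite S"
  have "(\<Sum>w\<in>S. c w * fa_mono w v) = (\<Sum>w\<in>S. if v = w then c v else 0)"
    by (rule sum.cong) (auto simp: fa_mono_def)
  then show ?thesis using \<open>finite S\<close> by (simp add: sum.delta)
qed

definition words :: "'x set \<Rightarrow> nat \<Rightarrow> 'x list set" where
  "words X n = {w \<in> lists X. length w \<le> n}"

lemma finite_words: "finite X \<Longrightarrow> finite (words X n)"
proof -
  assume "finite X"
  have "words X n = {xs. set xs \<subseteq> X \<and> length xs \<le> n}" by (auto simp: words_def)
  then show ?thesis using finite_lists_length_le[OF \<open>finite X\<close>] by simp
qed

lemma growth_sets:
  assumes "finite X"
  shows "finite {card S | S. S \<subseteq> {w \<in> lists X. length w \<le> n} \<and> indep_mod I S}"
    "{card S | S. S \<subseteq> {w \<in> lists X. length w \<le> n} \<and> indep_mod I S} \<noteq> {}"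
proof -
  have "{card S | S. S \<subseteq> {w \<in> lists X. length w \<le> n} \<and> indep_mod I S} \<subseteq> card ` Pow (words X n)"
    by (auto simp: words_def)
  then show "finite {card S | S. S \<subseteq> {w \<in> lists X. length w \<le> n} \<and> indep_mod I S}"
    by (rule finite_subset) (simp add: finite_words[OF assms])
  have "indep_mod I {}" by (simp add: indep_mod_def)
  then show "{card S | S. S \<subseteq> {w \<in> lists X. length w \<le> n} \<and> indep_mod I S} \<noteq> {}" by blast
qed

lemma growth_ge:
  assumes "finite X" "S \<subseteq> words X n" "indep_mod I S"
  shows "card S \<le> growth X I n"
proof -
  have "card S \<in> {card S | S. S \<subseteq> {w \<in> lists X. length w \<le> n} \<and> indep_mod I S}"
    using assms(2,3) unfolding words_def by blast
  then show ?thesis unfolding growth_def by (rule Max_ge[OF growth_sets(1)[OF assms(1)]])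
qed

lemma growth_obtain:
  assumes "finite X"
  shows "\<exists>S. S \<subseteq> words X n \<and> indep_mod I S \<and> card S = growth X I n"
proof -
  have "growth X I n \<in> {card S | S. S \<subseteq> {w \<in> lists X. length w \<le> n} \<and> indep_mod I S}"
    unfolding growth_def by (rule Max_in[OF growth_sets[OF assms]])
  then obtain S where S: "growth X I n = card S" "S \<subseteq> {w \<in> lists X. length w \<le> n}" "indep_mod I S"
    unfolding mem_Collect_eq by blast
  show ?thesis unfolding words_def by (rule exI[of _ S]) (use S in simp)
qed

lemma indep_modD: "indep_mod I S \<Longrightarrow> (\<lambda>v. \<Sum>w\<in>S. c w * fa_mono w v) \<in> I \<Longrightarrow> w \<in> S \<Longrightarrow> c w = 0"
  unfolding indep_mod_def by blast

lemma indep_not_in: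
  fixes J :: "('x list \<Rightarrow> 'k::field) set"
  assumes "indep_mod J S" "finite S" "s \<in> S"
  shows "fa_mono s \<notin> J"
proof
  assume "fa_mono s \<in> J"
  let ?c = "\<lambda>w. if w = s then (1::'k) else 0"
  have "(\<lambda>v. \<Sum>w\<in>S. ?c w * fa_mono w v) = fa_mono s"
  proof (rule ext)
    fix v
    have "(\<Sum>w\<in>S. ?c w * fa_mono w v) = (if v \<in> S then ?c v else 0)" by (rule combo_eval[OF assms(2)])
    also have "\<dots> = fa_mono s v" using assms(3) unfolding fa_mono_def by auto
    finally show "(\<Sum>w\<in>S. ?c w * fa_mono w v) = fa_mono s v" .
  qed
  then have "?c s = 0" using indep_modD[OF assms(1), of ?c s] \<open>fa_mono s \<in> J\<close> assms(3) by simp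
  then show False by simp
qed

lemma lead_monos_in_J:
  "l \<in> lead_monos lt I \<Longrightarrow> fa_mono l \<in> assoc_monomial_ideal X lt I"
  unfolding assoc_monomial_ideal_def fa_ideal_gen_monos_def by blast

lemma indep_J_I:
  assumes mo: "monomial_order X lt" and idl: "fa_ideal X I"
    and ind: "indep_mod (assoc_monomial_ideal X lt I) S" and fin: "finite S"
  shows "indep_mod I S"
  unfolding indep_mod_def
proof (intro allI impI ballI)
  fix c :: "'a list \<Rightarrow> 'b" and w
  assume gI: "(\<lambda>v. \<Sum>w\<in>S. c w * fa_mono w v) \<in> I" and w: "w \<in> S"
  let ?g = "(\<lambda>v. \<Sum>w\<in>S. c w * fa_mono w v)"
  show "c w = 0"
  proof (rule ccontr)
    assume cw: "c w \<noteq> 0"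
    have gv: "\<And>v. ?g v = (if v \<in> S then c v else 0)" using fin by (simp add: combo_eval)
    have nz: "?g \<noteq> fa_zero"
    proof
      assume "?g = fa_zero"
      then have "?g w = 0" using fun_cong[OF \<open>?g = fa_zero\<close>, of w] by (simp add: fa_zero_def)
      then show False using gv[of w] w cw by simp
    qed
    have el: "fa_elem X ?g" using ideal_elem[OF idl gI] .
    have "?g (lead_mono lt ?g) \<noteq> 0" using lead_mono_props(1)[OF mo el nz] .
    then have inS: "lead_mono lt ?g \<in> S"
    proof (rule contrapos_pp)
      assume "lead_mono lt ?g \<notin> S"
      then show "\<not> ?g (lead_mono lt ?g) \<noteq> 0" using gv[of "lead_mono lt ?g"] by simp
    qed
    have "lead_mono lt ?g \<in> lead_monos lt I" unfolding lead_monos_def using gI nz by blast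
    then have "fa_mono (lead_mono lt ?g) \<in> assoc_monomial_ideal X lt I" by (rule lead_monos_in_J)
    then show False using indep_not_in[OF ind fin inS] by simp
  qed
qed

lemma growth_J_le_I:
  assumes "finite X" "monomial_order X lt" "fa_ideal X I"
  shows "growth X (assoc_monomial_ideal X lt I) n \<le> growth X I n"
proof -
  obtain S where S: "S \<subseteq> words X n" "indep_mod (assoc_monomial_ideal X lt I) S"
    "card S = growth X (assoc_monomial_ideal X lt I) n"
    using growth_obtain[OF assms(1)] by blast
  have fin: "finite S" using S(1) finite_words[OF assms(1)] finite_subset by blast
  have "indep_mod I S" using indep_J_I[OF assms(2,3) S(2) fin] .
  then have "card S \<le> growth X I n" by (rule growth_ge[OF assms(1) S(1)])
  then show ?thesis using S(3) by linarith
qed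

lemma ln_nat_nonneg: "0 \<le> ln (real (a::nat))"
  by (cases "a = 0") auto

lemma ln_nat_mono: "(a::nat) \<le> b \<Longrightarrow> ln (real a) \<le> ln (real b)"
  by (cases "a = 0") (auto simp: ln_nat_nonneg)

lemma GKdim_mono:
  assumes "\<And>n. growth X J n \<le> growth X I n"
  shows "GKdim X J \<le> GKdim X I"
  unfolding GKdim_def
proof (rule Limsup_mono, rule always_eventually, rule allI)
  fix n
  show "ereal (ln (real (growth X J n)) / ln (real n)) \<le> ereal (ln (real (growth X I n)) / ln (real n))"
    using ln_nat_mono[OF assms[of n]] ln_nat_nonneg[of n] by (simp add: divide_right_mono)
qed


definition normal_word :: "('x list \<Rightarrow> 'x list \<Rightarrow> bool) \<Rightarrow> ('x list \<Rightarrow> 'k::field) set \<Rightarrow> 'x list \<Rightarrow> bool" where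
  "normal_word lt I w \<longleftrightarrow> \<not> (\<exists>a b l. l \<in> lead_monos lt I \<and> w = a @ l @ b)"

lemma reduce:
  assumes idl: "fa_ideal X I" and mo: "monomial_order X lt"
  shows "w \<in> lists X \<Longrightarrow> \<exists>r. (\<forall>t. r t \<noteq> 0 \<longrightarrow> t \<in> lists X \<and> normal_word lt I t \<and> (t = w \<or> lt t w))
            \<and> fa_mono w - r \<in> I"
proof (induction w rule: wf_induct[of "{(u, v). u \<in> lists X \<and> v \<in> lists X \<and> lt u v}"])
  case 1
  show ?case by (rule mo_wf[OF mo])
next
  case (2 w)
  note tr = mo_tr[OF mo] and comp = mo_comp[OF mo]
  have wX: "w \<in> lists X" using 2 by simp
  show ?case
  proof (cases "normal_word lt I w")
    case True
    have z: "fa_mono w - fa_mono w \<in> I" using ideal_zero[OF idl] by (metis diff_self)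
    show ?thesis
    proof (intro exI[of _ "fa_mono w"] conjI)
      show "fa_mono w - fa_mono w \<in> I" by (rule z)
      show "\<forall>t. fa_mono w t \<noteq> 0 \<longrightarrow> t \<in> lists X \<and> normal_word lt I t \<and> (t = w \<or> lt t w)"
        using True wX by (auto simp: fa_mono_def)
    qed
  next
    case False
    then obtain a b l where l: "l \<in> lead_monos lt I" and w: "w = a @ l @ b"
      unfolding normal_word_def by blast
    then obtain g where g: "g \<in> I" "g \<noteq> fa_zero" "l = lead_mono lt g"
      unfolding lead_monos_def by blast
    have el: "fa_elem X g" using ideal_elem[OF idl g(1)] .
    note lp = lead_mono_props[OF mo el g(2), folded g(3)]
    have aX: "a \<in> lists X" and bX: "b \<in> lists X" using wX w by auto
    define h where "h = fa_mul (fa_mul (fa_mono a) g) (fa_mono b)"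
    have hI: "h \<in> I" unfolding h_def
      using ideal_mul[OF idl g(1) fa_elem_mono[OF aX] fa_elem_mono[OF bX]] .
    define c where "c = g l"
    have c0: "c \<noteq> 0" using lp(1) by (simp add: c_def)
    define h' where "h' = (\<lambda>v. inverse c * h v)"
    have h'I: "h' \<in> I" unfolding h'_def using ideal_scale[OF idl hI] .
    define e where "e = fa_mono w - h'"
    define E where "E = {v. e v \<noteq> 0}"
    have Eprop: "v \<in> lists X \<and> lt v w" if v: "v \<in> E" for v
    proof (cases "v = w")
      case True
      have "h w = g l" unfolding h_def w by (rule fa_mul_monos)
      then have "e w = 0" using c0 by (simp add: e_def h'_def fa_mono_def c_def)
      then show ?thesis using v True by (simp add: E_def)
    next
      case False
      then have "h v \<noteq> 0" using v by (auto simp: E_def e_def h'_def fa_mono_def)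
      have "\<exists>t. v = a @ t @ b"
      proof (rule ccontr)
        assume "\<not> (\<exists>t. v = a @ t @ b)"
        then have "h v = 0" unfolding h_def by (rule fa_mul_monos_zero)
        then show False using \<open>h v \<noteq> 0\<close> by simp
      qed
      then obtain t where t: "v = a @ t @ b" by blast
      then have gt: "g t \<noteq> 0" using \<open>h v \<noteq> 0\<close> by (simp add: h_def fa_mul_monos)
      have tX: "t \<in> lists X" using gt el by (auto simp: fa_elem_def)
      have "t \<noteq> l" using False t w by auto
      then have "lt t l" using lp(2)[OF gt] by simp
      then have "lt v w" unfolding t w using comp[OF tX lp(3) aX bX] by simp
      then show ?thesis using t tX aX bX by simp
    qed
    have finE: "finite E"
    proof -
      have "E \<subseteq> insert w ((\<lambda>t. a @ t @ b) ` {t. g t \<noteq> 0})"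
      proof
        fix v assume v: "v \<in> E"
        show "v \<in> insert w ((\<lambda>t. a @ t @ b) ` {t. g t \<noteq> 0})"
        proof (cases "v = w")
          case False
          then have "h v \<noteq> 0" using v by (auto simp: E_def e_def h'_def fa_mono_def)
          have "\<exists>t. v = a @ t @ b"
          proof (rule ccontr)
            assume "\<not> (\<exists>t. v = a @ t @ b)"
            then have "h v = 0" unfolding h_def by (rule fa_mul_monos_zero)
            then show False using \<open>h v \<noteq> 0\<close> by simp
          qed
          then obtain t where t: "v = a @ t @ b" by blast
          then have gt: "g t \<noteq> 0" using \<open>h v \<noteq> 0\<close> by (simp add: h_def fa_mul_monos)
          then show ?thesis using t by blast
        qed simp
      qed
      moreover have "finite {t. g t \<noteq> 0}" using el by (simp add: fa_elem_def)
      ultimately show ?thesis using finite_subset by blast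
    qed
    have "\<forall>v\<in>E. \<exists>r. (\<forall>t. r t \<noteq> 0 \<longrightarrow> t \<in> lists X \<and> normal_word lt I t \<and> (t = v \<or> lt t v))
            \<and> fa_mono v - r \<in> I"
    proof
      fix v assume "v \<in> E"
      then have "(v, w) \<in> {(u, v). u \<in> lists X \<and> v \<in> lists X \<and> lt u v}" "v \<in> lists X"
        using Eprop wX by auto
      then show "\<exists>r. (\<forall>t. r t \<noteq> 0 \<longrightarrow> t \<in> lists X \<and> normal_word lt I t \<and> (t = v \<or> lt t v))
            \<and> fa_mono v - r \<in> I" using 2 by blast
    qed
    from bchoice[OF this] obtain R where R0: "\<forall>v\<in>E. (\<forall>t. R v t \<noteq> 0 \<longrightarrow> t \<in> lists X \<and> normal_word lt I t \<and> (t = v \<or> lt t v))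
            \<and> fa_mono v - R v \<in> I" by blast
    have R: "\<And>v. v \<in> E \<Longrightarrow> (\<forall>t. R v t \<noteq> 0 \<longrightarrow> t \<in> lists X \<and> normal_word lt I t \<and> (t = v \<or> lt t v))
            \<and> fa_mono v - R v \<in> I" using R0 by blast
    define r where "r = (\<lambda>t. \<Sum>v\<in>E. e v * R v t)"
    have rsupp: "t \<in> lists X \<and> normal_word lt I t \<and> (t = w \<or> lt t w)" if "r t \<noteq> 0" for t
    proof -
      obtain v where v: "v \<in> E" "e v * R v t \<noteq> 0"
        using \<open>r t \<noteq> 0\<close> unfolding r_def by (meson sum.not_neutral_contains_not_neutral)
      then have "R v t \<noteq> 0" by simp
      then have tv: "t \<in> lists X" "normal_word lt I t" "t = v \<or> lt t v" using R[OF v(1)] by auto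
      have "v \<in> lists X" "lt v w" using Eprop[OF v(1)] by auto
      then have "lt t w" using tv tr wX by blast
      then show ?thesis using tv by simp
    qed
    have eq: "fa_mono w - r = h' + (\<lambda>t. \<Sum>v\<in>E. e v * (fa_mono v - R v) t)"
    proof (rule ext)
      fix t
      have "e t = (\<Sum>v\<in>E. e v * fa_mono v t)" using finE by (simp add: combo_eval E_def)
      then have "fa_mono w t = h' t + (\<Sum>v\<in>E. e v * fa_mono v t)"
        unfolding e_def by (metis (no_types) add.commute diff_eq_eq minus_apply)
      then show "(fa_mono w - r) t = (h' + (\<lambda>t. \<Sum>v\<in>E. e v * (fa_mono v - R v) t)) t"
        by (simp add: r_def right_diff_distrib sum_subtractf)
    qed
    have "(\<lambda>t. \<Sum>v\<in>E. e v * (fa_mono v - R v) t) \<in> I"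
      by (rule ideal_sum[OF idl finE]) (use R in blast)
    then have "fa_mono w - r \<in> I" unfolding eq using ideal_add[OF idl h'I] by blast
    then show ?thesis using rsupp by blast
  qed
qed

interpretation fvs: vector_space "(\<lambda>c (p::'x list \<Rightarrow> 'k::field) w. c * p w)"
  by unfold_locales (simp_all add: fun_eq_iff algebra_simps)

lemma count_bound:
  fixes I :: "('x list \<Rightarrow> 'k::field) set" and r :: "'x list \<Rightarrow> 'x list \<Rightarrow> 'k"
  assumes idl: "fa_ideal X I" and finT: "finite T" and finS: "finite S" and ind: "indep_mod I S"
    and red: "\<And>s. s \<in> S \<Longrightarrow> (\<forall>t. r s t \<noteq> 0 \<longrightarrow> t \<in> T) \<and> fa_mono s - r s \<in> I"
  shows "card S \<le> card T"
proof -
  have inj: "inj_on r S"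
  proof (rule inj_onI, rule ccontr)
    fix s1 s2 assume s: "s1 \<in> S" "s2 \<in> S" "r s1 = r s2" "s1 \<noteq> s2"
    define c where "c = (\<lambda>w. if w = s1 then (1::'k) else if w = s2 then -1 else 0)"
    have "(\<lambda>v. \<Sum>w\<in>S. c w * fa_mono w v) = (fa_mono s1 - r s1) - (fa_mono s2 - r s2)"
    proof (rule ext)
      fix v
      show "(\<Sum>w\<in>S. c w * fa_mono w v) = ((fa_mono s1 - r s1) - (fa_mono s2 - r s2)) v"
        unfolding combo_eval[OF finS] using s by (auto simp: c_def fa_mono_def)
    qed
    moreover have "(fa_mono s1 - r s1) - (fa_mono s2 - r s2) \<in> I"
      using red[OF s(1)] red[OF s(2)] by (intro ideal_diff[OF idl, of "fa_mono s1 - r s1"]) blast+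
    ultimately have "c s1 = 0" using indep_modD[OF ind, of c s1] s by simp
    then show False by (simp add: c_def)
  qed
  have indep: "fvs.independent (r ` S)"
  proof
    assume "fvs.dependent (r ` S)"
    then obtain u where u: "\<exists>v\<in>r ` S. u v \<noteq> 0" "(\<Sum>v\<in>r ` S. (\<lambda>w. u v * v w)) = 0"
      using fvs.dependent_finite[OF finite_imageI[OF finS]] by blast
    have "(\<Sum>v\<in>r ` S. (\<lambda>w. u v * v w)) = (\<Sum>s\<in>S. (\<lambda>w. u (r s) * r s w))"
      by (rule sum.reindex_cong[OF inj refl]) simp
    then have z0: "(\<Sum>s\<in>S. (\<lambda>w. u (r s) * r s w)) = 0" using u(2) by simp
    have z: "(\<Sum>s\<in>S. u (r s) * r s t) = 0" for t
    proof -
      have "(\<Sum>s\<in>S. (\<lambda>w. u (r s) * r s w)) t = (0::'x list \<Rightarrow> 'k) t" using z0 by simp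
      then show ?thesis by (simp add: sum_fun_app)
    qed
    define c where "c = (\<lambda>s. u (r s))"
    have "(\<lambda>t. \<Sum>s\<in>S. c s * (fa_mono s - r s) t) \<in> I"
      by (rule ideal_sum[OF idl finS]) (use red in blast)
    moreover have "(\<lambda>t. \<Sum>s\<in>S. c s * (fa_mono s - r s) t) = (\<lambda>v. \<Sum>w\<in>S. c w * fa_mono w v)"
    proof (rule ext)
      fix t
      have "(\<Sum>s\<in>S. c s * (fa_mono s - r s) t) = (\<Sum>s\<in>S. c s * fa_mono s t) - (\<Sum>s\<in>S. c s * r s t)"
        by (simp add: right_diff_distrib sum_subtractf)
      then show "(\<Sum>s\<in>S. c s * (fa_mono s - r s) t) = (\<Sum>w\<in>S. c w * fa_mono w t)"
        using z by (simp add: c_def)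
    qed
    ultimately have "\<forall>s\<in>S. c s = 0" using indep_modD[OF ind, of c] by simp
    then show False using u(1) by (auto simp: c_def)
  qed
  have span: "r ` S \<subseteq> fvs.span (fa_mono ` T)"
  proof
    fix p assume "p \<in> r ` S"
    then obtain s where s: "s \<in> S" "p = r s" by blast
    have "p = (\<Sum>t\<in>T. (\<lambda>w. r s t * fa_mono t w))"
    proof (rule ext)
      fix w
      have "(\<Sum>t\<in>T. (\<lambda>w. r s t * fa_mono t w)) w = (\<Sum>t\<in>T. r s t * fa_mono t w)"
        by (simp add: sum_fun_app)
      also have "\<dots> = (if w \<in> T then r s w else 0)" by (rule combo_eval[OF finT])
      also have "\<dots> = r s w" using red[OF s(1)] by auto
      finally show "p w = (\<Sum>t\<in>T. (\<lambda>w. r s t * fa_mono t w)) w" using s by simp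
    qed
    also have "\<dots> \<in> fvs.span (fa_mono ` T)"
      by (intro fvs.span_sum fvs.span_scale fvs.span_base) auto
    finally show "p \<in> fvs.span (fa_mono ` T)" .
  qed
  have "card (r ` S) \<le> card (fa_mono ` T :: ('x list \<Rightarrow> 'k) set)"
    using fvs.independent_span_bound[OF finite_imageI[OF finT] indep span] by simp
  also have "\<dots> \<le> card T" by (rule card_image_le[OF finT])
  finally show ?thesis using card_image[OF inj] by simp
qed

lemma real_step:
  fixes l L lK d y x g e eps :: real
  assumes l: "l > 0" and L: "L = lK + d * l" "L > 0" and lK: "lK \<le> eps * l"
    and y: "0 \<le> y" "y / L < g + eps" and xy: "x \<le> y" and eps: "eps > 0" "eps \<le> 1"
    and g: "g \<ge> 0" and d: "d \<ge> 0" and e: "eps * (g + d + 1) \<le> e"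
  shows "x / l \<le> g * d + e"
proof -
  have "y < (g + eps) * L" using y(2) L(2) by (simp add: pos_divide_less_eq)
  also have "\<dots> \<le> (g + eps) * (eps * l + d * l)"
    using lK L(1) g eps by (intro mult_left_mono) auto
  also have "\<dots> = ((g + eps) * (eps + d)) * l" by (simp add: algebra_simps)
  finally have "x < ((g + eps) * (eps + d)) * l" using xy by simp
  then have "x / l < (g + eps) * (eps + d)" using l by (simp add: pos_divide_less_eq)
  also have "(g + eps) * (eps + d) = g * d + eps * (g + d + eps)" by (simp add: algebra_simps)
  also have "\<dots> \<le> g * d + eps * (g + d + 1)" using eps by (intro add_left_mono mult_left_mono) auto
  also have "\<dots> \<le> g * d + e" using e by simp
  finally show ?thesis by simp
qed

lemma limsup_transfer:
  fixes gI gJ :: "nat \<Rightarrow> nat" and K d :: nat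
  assumes d: "d \<ge> 1" and le: "\<And>n. n \<ge> 1 \<Longrightarrow> gI n \<le> gJ ((K + 1) * n ^ d)"
  shows "limsup (\<lambda>n. ereal (ln (real (gI n)) / ln (real n)))
           \<le> ereal (real d) * limsup (\<lambda>n. ereal (ln (real (gJ n)) / ln (real n)))"
proof -
  define b where "b = (\<lambda>n. ereal (ln (real (gJ n)) / ln (real n)))"
  define G where "G = limsup b"
  have G0: "0 \<le> G" unfolding G_def
    by (rule le_Limsup[OF trivial_limit_sequentially], rule always_eventually)
       (simp add: b_def ln_nat_nonneg)
  show ?thesis
  proof (cases G)
    case PInf
    then show ?thesis using d by (simp add: G_def b_def)
  next
    case MInf
    then show ?thesis using G0 by simp
  next
    case (real g)
    have g0: "g \<ge> 0" using G0 real by simp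
    show ?thesis
    proof (rule ereal_le_epsilon2)
      fix e :: real assume e: "e > 0"
      define eps where "eps = min 1 (e / (g + real d + 1))"
      have eps: "eps > 0" "eps \<le> 1" using e g0 by (auto simp: eps_def)
      have epse: "eps * (g + real d + 1) \<le> e"
      proof -
        have "eps \<le> e / (g + real d + 1)" by (simp add: eps_def)
        then show ?thesis using g0 by (simp add: pos_le_divide_eq)
      qed
      have "limsup b < ereal (g + eps)" using real eps by (simp add: G_def[symmetric])
      from Limsup_lessD[OF this] obtain N0 where N0: "\<And>n. n \<ge> N0 \<Longrightarrow> b n < ereal (g + eps)"
        unfolding eventually_sequentially by blast
      obtain N1 :: nat where N1: "exp (ln (real (K + 1)) / eps) \<le> real N1" using real_arch_simple by blast
      have ev: "\<forall>n\<ge>max (max N0 N1) 2. ln (real (gI n)) / ln (real n) \<le> g * real d + e"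
      proof (intro allI impI)
        fix n assume n: "max (max N0 N1) 2 \<le> n"
        define m where "m = (K + 1) * n ^ d"
        have n1: "n \<ge> 1" "n \<ge> 2" "n \<ge> N0" "n \<ge> N1" using n by auto
        have nm: "n \<le> m"
        proof -
          have "n \<le> n ^ d" using self_le_power[of n d] n1 d by simp
          also have "n ^ d \<le> (K + 1) * n ^ d" by simp
          finally show ?thesis by (simp add: m_def)
        qed
        have bm: "ln (real (gJ m)) / ln (real m) < g + eps"
          using N0[of m] nm n1 by (simp add: b_def)
        have l: "ln (real n) > 0" using n1 by simp
        have Lm: "ln (real m) = ln (real (K + 1)) + real d * ln (real n)"
        proof -
          have "real m = real (K + 1) * real n ^ d" by (simp add: m_def algebra_simps)
          then have "ln (real m) = ln (real (K + 1)) + ln (real n ^ d)"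
            using n1 by (simp only: ln_mult of_nat_0_less_iff zero_less_power) (simp add: ln_mult)
          also have "ln (real n ^ d) = real d * ln (real n)" using n1 by (simp add: ln_realpow)
          finally show ?thesis .
        qed
        have lK: "ln (real (K + 1)) \<le> eps * ln (real n)"
        proof -
          have "exp (ln (real (K + 1)) / eps) \<le> real n" using N1 n1 by linarith
          then have "ln (exp (ln (real (K + 1)) / eps)) \<le> ln (real n)"
            using n1 by (subst ln_le_cancel_iff) auto
          then have "ln (real (K + 1)) / eps \<le> ln (real n)" by simp
          then show ?thesis using eps by (simp add: pos_divide_le_eq mult.commute)
        qed
        show "ln (real (gI n)) / ln (real n) \<le> g * real d + e"
        proof (rule real_step[OF l Lm])
          show "ln (real m) > 0" using nm n1 by simp
          show "ln (real (K + 1)) \<le> eps * ln (real n)" by (rule lK)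
          show "0 \<le> ln (real (gJ m))" by (rule ln_nat_nonneg)
          show "ln (real (gJ m)) / ln (real m) < g + eps" by (rule bm)
          show "ln (real (gI n)) \<le> ln (real (gJ m))" unfolding m_def using le[OF n1(1)] by (rule ln_nat_mono)
        qed (use eps g0 epse in auto)
      qed
      have "limsup (\<lambda>n. ereal (ln (real (gI n)) / ln (real n))) \<le> ereal (g * real d + e)"
      proof (rule Limsup_bounded)
        show "\<forall>\<^sub>F n in sequentially. ereal (ln (real (gI n)) / ln (real n)) \<le> ereal (g * real d + e)"
          unfolding eventually_sequentially
        proof (intro exI[of _ "max (max N0 N1) 2"] allI impI)
          fix n assume "max (max N0 N1) 2 \<le> n"
          then show "ereal (ln (real (gI n)) / ln (real n)) \<le> ereal (g * real d + e)" using ev by simp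
        qed
      qed
      then show "limsup (\<lambda>n. ereal (ln (real (gI n)) / ln (real n))) \<le> ereal (real d) * limsup (\<lambda>n. ereal (ln (real (gJ n)) / ln (real n))) + ereal e"
        using real by (simp add: G_def b_def mult.commute)
    qed
  qed
qed

lemma fa_mul_nz: "fa_mul p q w \<noteq> 0 \<Longrightarrow> \<exists>i\<le>length w. p (take i w) \<noteq> 0 \<and> q (drop i w) \<noteq> 0"
proof -
  assume "fa_mul p q w \<noteq> 0"
  then obtain i where "i \<in> {..length w}" "p (take i w) * q (drop i w) \<noteq> 0"
    unfolding fa_mul_def by (meson sum.not_neutral_contains_not_neutral)
  then show ?thesis by auto
qed

lemma fa_elem_mul:
  assumes p: "fa_elem X p" and q: "fa_elem X q"
  shows "fa_elem X (fa_mul p q)"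
proof -
  have sub: "{w. fa_mul p q w \<noteq> 0} \<subseteq> (\<lambda>(x, y). x @ y) ` ({w. p w \<noteq> 0} \<times> {w. q w \<noteq> 0})"
  proof
    fix w assume "w \<in> {w. fa_mul p q w \<noteq> 0}"
    then obtain i where i: "p (take i w) \<noteq> 0" "q (drop i w) \<noteq> 0" using fa_mul_nz by blast
    then have "(take i w, drop i w) \<in> {w. p w \<noteq> 0} \<times> {w. q w \<noteq> 0}" by simp
    moreover have "w = (\<lambda>(x, y). x @ y) (take i w, drop i w)" by simp
    ultimately show "w \<in> (\<lambda>(x, y). x @ y) ` ({w. p w \<noteq> 0} \<times> {w. q w \<noteq> 0})" by blast
  qed
  have "finite ((\<lambda>(x, y). x @ y) ` ({w. p w \<noteq> 0} \<times> {w. q w \<noteq> 0}))"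
    using p q by (simp add: fa_elem_def)
  then have fin: "finite {w. fa_mul p q w \<noteq> 0}" using sub finite_subset by blast
  have "w \<in> lists X" if nz: "fa_mul p q w \<noteq> 0" for w
  proof -
    obtain i where i: "p (take i w) \<noteq> 0" "q (drop i w) \<noteq> 0" using fa_mul_nz[OF nz] by blast
    then have "take i w \<in> lists X" "drop i w \<in> lists X" using p q by (auto simp: fa_elem_def)
    then have "take i w @ drop i w \<in> lists X" by (simp only: append_in_lists_conv)
    then show ?thesis by simp
  qed
  then show ?thesis using fin by (simp add: fa_elem_def)
qed

definition Kset :: "'x set \<Rightarrow> ('x list \<Rightarrow> 'x list \<Rightarrow> bool) \<Rightarrow> ('x list \<Rightarrow> 'k::field) set \<Rightarrow> ('x list \<Rightarrow> 'k) set" where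
  "Kset X lt I = {p. fa_elem X p \<and> (\<forall>w. p w \<noteq> 0 \<longrightarrow> \<not> normal_word lt I w)}"

lemma nonnormal_ext: "\<not> normal_word lt I u \<Longrightarrow> \<not> normal_word lt I (x @ u @ y)"
proof -
  assume "\<not> normal_word lt I u"
  then obtain a b l where "l \<in> lead_monos lt I" "u = a @ l @ b" unfolding normal_word_def by blast
  then have "x @ u @ y = (x @ a) @ l @ (b @ y)" by simp
  then show ?thesis using \<open>l \<in> lead_monos lt I\<close> unfolding normal_word_def by blast
qed

lemma Kset_ideal:
  fixes I :: "('x list \<Rightarrow> 'k::field) set"
  assumes idl: "fa_ideal X I" and mo: "monomial_order X lt"
  shows "fa_ideal X (Kset X lt I)"
  unfolding fa_ideal_def
proof (intro conjI ballI allI impI)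
  show "Kset X lt I \<subseteq> {p. fa_elem X p}" by (auto simp: Kset_def)
  show "fa_zero \<in> Kset X lt I" by (simp add: Kset_def fa_elem_def fa_zero_def)
next
  fix p q :: "'x list \<Rightarrow> 'k" assume p: "p \<in> Kset X lt I" and q: "q \<in> Kset X lt I"
  have "{w. fa_add p q w \<noteq> 0} \<subseteq> {w. p w \<noteq> 0} \<union> {w. q w \<noteq> 0}" by (auto simp: fa_add_def)
  moreover have "finite ({w. p w \<noteq> 0} \<union> {w. q w \<noteq> 0})" using p q by (simp add: Kset_def fa_elem_def)
  ultimately have "finite {w. fa_add p q w \<noteq> 0}" using finite_subset by blast
  moreover have pq: "\<And>w. fa_add p q w \<noteq> 0 \<Longrightarrow> p w \<noteq> 0 \<or> q w \<noteq> 0" by (auto simp: fa_add_def)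
  ultimately show "fa_add p q \<in> Kset X lt I" using p q unfolding Kset_def fa_elem_def mem_Collect_eq by blast
next
  fix p a b :: "'x list \<Rightarrow> 'k" assume p: "p \<in> Kset X lt I" and ab: "fa_elem X a \<and> fa_elem X b"
  have pe: "fa_elem X p" using p by (simp add: Kset_def)
  have el: "fa_elem X (fa_mul (fa_mul a p) b)" using ab pe by (intro fa_elem_mul) auto
  have "\<not> normal_word lt I w" if nz: "fa_mul (fa_mul a p) b w \<noteq> 0" for w
  proof -
    obtain i where i: "fa_mul a p (take i w) \<noteq> 0" using fa_mul_nz[OF nz] by blast
    obtain j where j: "p (drop j (take i w)) \<noteq> 0" using fa_mul_nz[OF i] by blast
    have "\<not> normal_word lt I (drop j (take i w))" using p j by (simp add: Kset_def)
    then have "\<not> normal_word lt I (take j (take i w) @ drop j (take i w) @ drop i w)" by (rule nonnormal_ext)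
    moreover have "take j (take i w) @ drop j (take i w) @ drop i w = w"
      by (simp only: append_assoc[symmetric] append_take_drop_id)
    ultimately show ?thesis by simp
  qed
  then show "fa_mul (fa_mul a p) b \<in> Kset X lt I" using el by (simp add: Kset_def)
qed

lemma J_sub_K:
  fixes I :: "('x list \<Rightarrow> 'k::field) set"
  assumes idl: "fa_ideal X I" and mo: "monomial_order X lt"
  shows "assoc_monomial_ideal X lt I \<subseteq> Kset X lt I"
proof -
  have "(fa_mono ` lead_monos lt I :: ('x list \<Rightarrow> 'k) set) \<subseteq> Kset X lt I"
  proof
    fix p :: "'x list \<Rightarrow> 'k" assume "p \<in> fa_mono ` lead_monos lt I"
    then obtain l where l: "l \<in> lead_monos lt I" "p = fa_mono l" by blast
    then obtain g where g: "g \<in> I" "g \<noteq> fa_zero" "l = lead_mono lt g" unfolding lead_monos_def by blast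
    have lX: "l \<in> lists X" using lead_mono_props(3)[OF mo ideal_elem[OF idl g(1)] g(2)] g(3) by simp
    have nn: "\<not> normal_word lt I l"
    proof -
      have "l = [] @ l @ []" by simp
      then show ?thesis using l(1) unfolding normal_word_def by blast
    qed
    have "fa_elem X p" using fa_elem_mono[OF lX] l(2) by simp
    moreover have "\<forall>w. p w \<noteq> 0 \<longrightarrow> \<not> normal_word lt I w" using l(2) nn by (simp add: fa_mono_def)
    ultimately show "p \<in> Kset X lt I" by (simp add: Kset_def)
  qed
  then show ?thesis using Kset_ideal[OF idl mo]
    unfolding assoc_monomial_ideal_def fa_ideal_gen_monos_def by blast
qed

lemma normal_indep_J:
  fixes I :: "('x list \<Rightarrow> 'k::field) set"
  assumes idl: "fa_ideal X I" and mo: "monomial_order X lt" and fin: "finite T"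
    and nT: "\<And>t. t \<in> T \<Longrightarrow> normal_word lt I t"
  shows "indep_mod (assoc_monomial_ideal X lt I) T"
  unfolding indep_mod_def
proof (intro allI impI ballI)
  fix c :: "'x list \<Rightarrow> 'k" and w
  assume cJ: "(\<lambda>v. \<Sum>w\<in>T. c w * fa_mono w v) \<in> assoc_monomial_ideal X lt I" and w: "w \<in> T"
  then have "(\<lambda>v. \<Sum>w\<in>T. c w * fa_mono w v) \<in> Kset X lt I" using J_sub_K[OF idl mo] by blast
  then have "(\<Sum>w'\<in>T. c w' * fa_mono w' w) \<noteq> 0 \<Longrightarrow> \<not> normal_word lt I w" by (simp add: Kset_def)
  then have "(\<Sum>w'\<in>T. c w' * fa_mono w' w) = 0" using nT[OF w] by blast
  then show "c w = 0" using w by (simp add: combo_eval[OF fin])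
qed

lemma growth_I_le_J:
  fixes I :: "('x list \<Rightarrow> 'k::field) set"
  assumes finX: "finite X" and idl: "fa_ideal X I" and mo: "monomial_order X lt"
    and bnd: "\<And>s t. s \<in> words X n \<Longrightarrow> t \<in> lists X \<Longrightarrow> t = s \<or> lt t s \<Longrightarrow> length t \<le> m"
  shows "growth X I n \<le> growth X (assoc_monomial_ideal X lt I) m"
proof -
  obtain S where S: "S \<subseteq> words X n" "indep_mod I S" "card S = growth X I n"
    using growth_obtain[OF finX] by blast
  have finS: "finite S" using S(1) finite_words[OF finX] finite_subset by blast
  have "\<forall>s\<in>S. \<exists>r. (\<forall>t. r t \<noteq> 0 \<longrightarrow> t \<in> lists X \<and> normal_word lt I t \<and> (t = s \<or> lt t s)) \<and> fa_mono s - r \<in> I"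
  proof
    fix s assume "s \<in> S"
    then have "s \<in> lists X" using S(1) by (auto simp: words_def)
    then show "\<exists>r. (\<forall>t. r t \<noteq> 0 \<longrightarrow> t \<in> lists X \<and> normal_word lt I t \<and> (t = s \<or> lt t s)) \<and> fa_mono s - r \<in> I"
      by (rule reduce[OF idl mo])
  qed
  from bchoice[OF this] obtain r where r: "\<forall>s\<in>S. (\<forall>t. r s t \<noteq> 0 \<longrightarrow> t \<in> lists X \<and> normal_word lt I t \<and> (t = s \<or> lt t s)) \<and> fa_mono s - r s \<in> I"
    by blast
  define T where "T = {t \<in> words X m. normal_word lt I t}"
  have finT: "finite T" unfolding T_def using finite_words[OF finX] by simp
  have "card S \<le> card T"
  proof (rule count_bound[OF idl finT finS S(2)])
    fix s assume s: "s \<in> S"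
    have "t \<in> T" if "r s t \<noteq> 0" for t
    proof -
      have t: "t \<in> lists X" "normal_word lt I t" "t = s \<or> lt t s" using r s that by auto
      have "length t \<le> m" using bnd[OF _ t(1) t(3)] s S(1) by blast
      then show ?thesis using t by (simp add: T_def words_def)
    qed
    then show "(\<forall>t. r s t \<noteq> 0 \<longrightarrow> t \<in> T) \<and> fa_mono s - r s \<in> I" using r s by blast
  qed
  also have "card T \<le> growth X (assoc_monomial_ideal X lt I) m"
  proof (rule growth_ge[OF finX])
    show "T \<subseteq> words X m" by (auto simp: T_def)
    show "indep_mod (assoc_monomial_ideal X lt I) T"
      by (rule normal_indep_J[OF idl mo finT]) (simp add: T_def)
  qed
  finally show ?thesis using S(3) by simp
qed

lemma poly_bound:
  fixes f :: "real poly"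
  assumes "0 \<le> x" "x \<le> real n" "1 \<le> n"
  shows "poly f x \<le> (\<Sum>i\<le>degree f. \<bar>coeff f i\<bar>) * real n ^ degree f"
proof -
  have "poly f x = (\<Sum>i\<le>degree f. coeff f i * x ^ i)" by (rule poly_altdef)
  also have "\<dots> \<le> (\<Sum>i\<le>degree f. \<bar>coeff f i\<bar> * real n ^ degree f)"
  proof (rule sum_mono)
    fix i assume i: "i \<in> {..degree f}"
    have "coeff f i * x ^ i \<le> \<bar>coeff f i\<bar> * x ^ i" using assms by (intro mult_right_mono) auto
    also have "\<dots> \<le> \<bar>coeff f i\<bar> * real n ^ i" using assms by (intro mult_left_mono power_mono) auto
    also have "\<dots> \<le> \<bar>coeff f i\<bar> * real n ^ degree f"
      using assms i by (intro mult_left_mono power_increasing) auto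
    finally show "coeff f i * x ^ i \<le> \<bar>coeff f i\<bar> * real n ^ degree f" .
  qed
  also have "\<dots> = (\<Sum>i\<le>degree f. \<bar>coeff f i\<bar>) * real n ^ degree f" by (simp add: sum_distrib_right)
  finally show ?thesis .
qed

theorem theorem1:
  fixes X :: "'x set" and I :: "('x list \<Rightarrow> 'k::field) set"
    and lt :: "'x list \<Rightarrow> 'x list \<Rightarrow> bool"
    and f :: "real poly" and d :: nat and N :: int
  assumes "finite X"
    and "fa_ideal X I"
    and "monomial_order X lt"
    and "degree f = d" and "d \<ge> 1"
    and "\<forall>u\<in>lists X. \<forall>v\<in>lists X. real (length u) \<ge> real_of_int N \<longrightarrow>
            lt u v \<longrightarrow> real (length u) \<le> poly f (real (length v))"
  shows "GKdim X (assoc_monomial_ideal X lt I) \<le> GKdim X I \<and>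
         GKdim X I \<le> ereal (real d) * GKdim X (assoc_monomial_ideal X lt I)"
proof
  note finX = assms(1) and idl = assms(2) and mo = assms(3) and deg = assms(4) and d1 = assms(5)
    and hyp = assms(6)
  show "GKdim X (assoc_monomial_ideal X lt I) \<le> GKdim X I"
    by (rule GKdim_mono, rule growth_J_le_I[OF finX mo idl])
  define C where "C = (\<Sum>i\<le>degree f. \<bar>coeff f i\<bar>)"
  define K where "K = nat \<lceil>max C (real_of_int N)\<rceil>"
  have KC: "C \<le> real K" and KN: "real_of_int N \<le> real K"
    using real_nat_ceiling_ge[of "max C (real_of_int N)"] unfolding K_def by auto
  have le: "growth X I n \<le> growth X (assoc_monomial_ideal X lt I) ((K + 1) * n ^ d)" if n1: "n \<ge> 1" for n
  proof (rule growth_I_le_J[OF finX idl mo])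
    fix s t assume s: "s \<in> words X n" and tX: "t \<in> lists X" and ts: "t = s \<or> lt t s"
    have sX: "s \<in> lists X" and sn: "length s \<le> n" using s by (auto simp: words_def)
    have nd: "n \<le> n ^ d" using self_le_power[of n d] n1 d1 by simp
    have nd1: "1 \<le> n ^ d" using n1 by simp
    have "real (length t) \<le> real ((K + 1) * n ^ d)"
    proof (cases "t = s")
      case True
      have "length t \<le> n ^ d" using True sn nd by simp
      also have "n ^ d \<le> (K + 1) * n ^ d" by simp
      finally show ?thesis by (simp only: of_nat_le_iff)
    next
      case False
      then have lts: "lt t s" using ts by simp
      show ?thesis
      proof (cases "real (length t) \<ge> real_of_int N")
        case True
        have "real (length t) \<le> poly f (real (length s))" using hyp tX sX True lts by blast
        also have "\<dots> \<le> C * real n ^ d" unfolding C_def deg[symmetric]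
          by (rule poly_bound) (use sn n1 in auto)
        also have "\<dots> \<le> real K * real n ^ d" using KC by (intro mult_right_mono) auto
        also have "\<dots> \<le> real ((K + 1) * n ^ d)" by (simp add: algebra_simps)
        finally show ?thesis .
      next
        case False
        then have "real (length t) \<le> real K" using KN by simp
        also have "real K \<le> real ((K + 1) * n ^ d)"
        proof -
          have "K \<le> (K + 1) * n ^ d" using nd1
            by (metis add_leD1 le_add1 mult.comm_neutral mult_le_mono)
          then show ?thesis by (simp only: of_nat_le_iff)
        qed
        finally show ?thesis .
      qed
    qed
    then show "length t \<le> (K + 1) * n ^ d" by (simp only: of_nat_le_iff)
  qed
  show "GKdim X I \<le> ereal (real d) * GKdim X (assoc_monomial_ideal X lt I)"
    unfolding GKdim_def
    by (rule limsup_transfer[where gI = "growth X I" and gJ = "growth X (assoc_monomial_ideal X lt I)" and K = K, OF d1 le])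
qed

end
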